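(* Let $r,\theta$ be real numbers with $1\le\theta\le 0.5r\le 3\theta$, and let $q(x)=1-(r-\theta)x+(r-2\theta)x^2+\theta x^3$. Then $q$ has a real root $\alpha<-1$, and if $\beta,\gamma$ denote the remaining two (complex) roots of $q$, then $\beta\gamma$ is real and $0<\beta\gamma<1$.
   Context: Note $q(x)=1+rx(x-1)+\theta x(x-1)^2$ and $q(x)=(1-x/\alpha)(1-x/\beta)(1-x/\gamma)$ where $\alpha,\beta,\gamma$ are the roots of $q$ (counted with multiplicity). *)

theory Defs
  imports "HOL-Analysis.Analysis" "HOL-Computational_Algebra.Polynomial"
begin

definition qpoly :: "real \<Rightarrow> real \<Rightarrow> real poly" where
  "qpoly r \<theta> = [:1, -(r - \<theta>), r - 2*\<theta>, \<theta>:]"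

end

theory Submission
  imports Defs
begin

theorem mainTheorem6:
  fixes r \<theta> :: real
  assumes "1 \<le> \<theta>" and "\<theta> \<le> r / 2" and "r / 2 \<le> 3 * \<theta>"
  shows "\<exists>\<alpha>::real. \<alpha> < -1 \<and> poly (qpoly r \<theta>) \<alpha> = 0 \<and>
           (\<forall>\<beta> \<gamma> :: complex.
              map_poly complex_of_real (qpoly r \<theta>)
                = smult (complex_of_real \<theta>)
                    ([:- complex_of_real \<alpha>, 1:] * [:- \<beta>, 1:] * [:- \<gamma>, 1:])
              \<longrightarrow> \<beta> * \<gamma> \<in> \<real> \<and> 0 < Re (\<beta> * \<gamma>) \<and> Re (\<beta> * \<gamma>) < 1)"
proof -
  have a: "poly (qpoly r \<theta>) (-6) < 0"
    using assms by (simp add: qpoly_def algebra_simps)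
  have b: "0 < poly (qpoly r \<theta>) (-1)"
    using assms by (simp add: qpoly_def algebra_simps)
  obtain \<alpha> where al: "-6 < \<alpha>" "\<alpha> < -1" "poly (qpoly r \<theta>) \<alpha> = 0"
    using poly_IVT_pos[OF _ a b] by auto
  show ?thesis
  proof (intro exI[of _ \<alpha>] conjI allI impI al)
    fix \<beta> \<gamma> :: complex
    assume h: "map_poly complex_of_real (qpoly r \<theta>)
                = smult (complex_of_real \<theta>)
                    ([:- complex_of_real \<alpha>, 1:] * [:- \<beta>, 1:] * [:- \<gamma>, 1:])"
    have "coeff (map_poly complex_of_real (qpoly r \<theta>)) 0 = coeff (smult (complex_of_real \<theta>)
                    ([:- complex_of_real \<alpha>, 1:] * [:- \<beta>, 1:] * [:- \<gamma>, 1:])) 0"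
      using h by simp
    hence e0: "1 = - (complex_of_real \<theta> * (\<gamma> * (\<beta> * complex_of_real \<alpha>)))"
      by (simp add: coeff_mult_0 qpoly_def coeff_map_poly)
    have e: "1 = - complex_of_real (\<theta> * \<alpha>) * (\<beta> * \<gamma>)"
      unfolding e0 of_real_mult by (metis mult.assoc mult.commute mult_minus_left)
    have ne: "\<theta> * \<alpha> \<noteq> 0" using assms al by auto
    have bg: "\<beta> * \<gamma> = complex_of_real (- 1 / (\<theta> * \<alpha>))"
    proof -
      have "complex_of_real (\<theta> * \<alpha>) \<noteq> 0" using ne by simp
      then have c: "- complex_of_real (\<theta> * \<alpha>) \<noteq> 0" by simp
      have "\<beta> * \<gamma> = 1 / (- complex_of_real (\<theta> * \<alpha>))"
        using c e by (metis eq_divide_eq mult.commute)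
      then show ?thesis by simp
    qed
    have t1: "1 * (-\<alpha>) \<le> \<theta> * (-\<alpha>)"
      by (rule mult_right_mono) (use assms al in auto)
    hence t: "1 < \<theta> * (-\<alpha>)" using al by linarith
    have eq: "- 1 / (\<theta> * \<alpha>) = 1 / (\<theta> * (-\<alpha>))" by simp
    have pq: "0 < 1 / T \<and> 1 / T < 1" if "1 < T" for T :: real using that by simp
    have p: "0 < - 1 / (\<theta> * \<alpha>)" unfolding eq using pq[OF t] by blast
    have q: "- 1 / (\<theta> * \<alpha>) < 1" unfolding eq using pq[OF t] by blast
    show "\<beta> * \<gamma> \<in> \<real>" unfolding bg by (rule Reals_of_real)
    show "0 < Re (\<beta> * \<gamma>)" unfolding bg Re_complex_of_real by (rule p)
    show "Re (\<beta> * \<gamma>) < 1" unfolding bg Re_complex_of_real by (rule q)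
  qed
qed

end
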